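(* Let $G$ be a mixed signed, directed graph on vertices $\{1,\dots,n\}$ and suppose $v^*\in(\mathbb{R}^n)^*$ satisfies $\langle v^*,x\rangle=0$ for all $x\in\mathcal{P}_G$. Let $\widetilde{G}_1,\dots,\widetilde{G}_r$ be the bipartite components of the augmented signed graph $\widetilde G$, with bipartitions $V(\widetilde{G}_s)=\widetilde L_s\cup\widetilde R_s$. Then $v^*$ is a linear combination of $e^*_{\pi(\widetilde L_1)}-e^*_{\pi(\widetilde R_1)},\dots,e^*_{\pi(\widetilde L_r)}-e^*_{\pi(\widetilde R_r)}$.
   Context: A mixed signed, directed graph $G$ on vertex set $\{1,\dots,n\}$ has a set of signed edges $+ij$ or $-ij$ (loops $\pm ii$ allowed) and directed edges $(i,j)$ with $i\ne j$; between a pair of vertices any subset of $+ij,-ij,(i,j),(j,i)$ may occur. Define $\rho(\pm ij)=\pm(e_i+e_j)$ (so $\rho(\pm ii)=\pm2e_i$) and $\rho((i,j))=e_j-e_i$ in $\mathbb{R}^n$; $\mathcal{P}_G=\mathrm{conv}(\rho(E(G)))$. The augmented signed graph $\widetilde G$ is the signed graph obtained by replacing each directed edge $(i,j)$ by a new (artificial) vertex $t_{(i,j)}$ and the two edges $-i\,t_{(i,j)}$ and $+t_{(i,j)}\,j$. For a set $S$ of vertices of $\widetilde G$, $\pi(S)=S\cap\{1,\dots,n\}$ (the non-artificial vertices of $S$). A component of a signed graph is a maximal connected subgraph (isolated vertices are components); it is bipartite if its vertex set can be partitioned into $L,R$ (one possibly empty) such that every edge has exactly one endpoint in each (a component with a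 loop is not bipartite). For $S\subseteq\{1,\dots,n\}$, $e_S^*=\sum_{i\in S}e_i^*$ in the dual basis. *)

theory Defs
  imports "HOL-Analysis.Analysis"
begin

text \<open>A mixed signed, directed graph on the finite vertex type 'n is given by
  SP (positive signed edges +ij, as pairs; (i,i) is a loop), SN (negative signed
  edges -ij) and D (directed edges (i,j), i \<noteq> j).\<close>

definition ev :: "'n::finite \<Rightarrow> real^'n" where
  "ev i = (\<chi> k. if k = i then 1 else 0)"

definition rho_set :: "('n::finite \<times> 'n) set \<Rightarrow> ('n \<times> 'n) set \<Rightarrow> ('n \<times> 'n) set \<Rightarrow> (real^'n) set" where
  "rho_set SP SN D =
     (\<lambda>(i,j). ev i + ev j) ` SP \<union> (\<lambda>(i,j). - (ev i + ev j)) ` SN \<union> (\<lambda>(i,j). ev j - ev i) ` D"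

definition PG :: "('n::finite \<times> 'n) set \<Rightarrow> ('n \<times> 'n) set \<Rightarrow> ('n \<times> 'n) set \<Rightarrow> (real^'n) set" where
  "PG SP SN D = convex hull (rho_set SP SN D)"

text \<open>Augmented signed graph: vertices Inl i (original) and Inr (i,j) = t_(i,j) (artificial).
  Edges as unordered pairs (signs are irrelevant for components and bipartiteness).\<close>

definition aug_vertices :: "('n \<times> 'n) set \<Rightarrow> ('n + ('n \<times> 'n)) set" where
  "aug_vertices D = range Inl \<union> Inr ` D"

definition aug_edges :: "('n \<times> 'n) set \<Rightarrow> ('n \<times> 'n) set \<Rightarrow> ('n \<times> 'n) set
     \<Rightarrow> (('n + ('n \<times> 'n)) \<times> ('n + ('n \<times> 'n))) set" where
  "aug_edges SP SN D =
     {(Inl i, Inl j) | i j. (i,j) \<in> SP \<union> SN}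
     \<union> {(Inl i, Inr (i,j)) | i j. (i,j) \<in> D}
     \<union> {(Inr (i,j), Inl j) | i j. (i,j) \<in> D}"

definition aug_adj where
  "aug_adj SP SN D = aug_edges SP SN D \<union> (aug_edges SP SN D)\<inverse>"

definition aug_components where
  "aug_components SP SN D =
     {C. \<exists>u \<in> aug_vertices D. C = {w. (u,w) \<in> (aug_adj SP SN D)\<^sup>*}}"

definition is_bipartition where
  "is_bipartition SP SN D C L R \<longleftrightarrow>
     L \<union> R = C \<and> L \<inter> R = {} \<and>
     (\<forall>(u,w) \<in> aug_edges SP SN D. u \<in> C \<and> w \<in> C \<longrightarrow>
        ((u \<in> L \<and> w \<in> R) \<or> (u \<in> R \<and> w \<in> L)))"

definition bipartite_comp where
  "bipartite_comp SP SN D C \<longleftrightarrow> (\<exists>L R. is_bipartition SP SN D C L R)"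

definition proj :: "('n + ('n \<times> 'n)) set \<Rightarrow> 'n set" where
  "proj S = {i. Inl i \<in> S}"

definition edual :: "'n::finite set \<Rightarrow> real^'n" where
  "edual S = (\<chi> i. if i \<in> S then 1 else 0)"

end

theory Submission imports Defs begin
lemma inner_ev: "v \<bullet> ev i = v $ i"
proof -
  have "ev i = axis i 1" by (simp add: ev_def axis_def vec_eq_iff)
  thus ?thesis by (simp add: inner_axis)
qed

definition fv :: "real^'n::finite \<Rightarrow> 'n + ('n\<times>'n) \<Rightarrow> real" where
  "fv v x = (case x of Inl i \<Rightarrow> v$i | Inr p \<Rightarrow> - v$(fst p))"

lemma edge_zero:
  assumes V: "\<forall>x \<in> PG SP SN D. v \<bullet> x = 0"
    and e: "(a,b) \<in> aug_adj SP SN D"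
  shows "fv v a + fv v b = 0"
proof -
  have rho: "v \<bullet> x = 0" if "x \<in> rho_set SP SN D" for x
    using V that hull_inc[of _ _ convex] unfolding PG_def by metis
  have sp: "v$i + v$j = 0" if "(i,j) \<in> SP" for i j
  proof -
    have "ev i + ev j \<in> rho_set SP SN D" using that unfolding rho_set_def by force
    from rho[OF this] show ?thesis by (simp add: inner_add_right inner_diff_right inner_minus_right inner_ev)
  qed
  have sn: "v$i + v$j = 0" if "(i,j) \<in> SN" for i j
  proof -
    have "- (ev i + ev j) \<in> rho_set SP SN D" using that unfolding rho_set_def by force
    from rho[OF this] show ?thesis by (simp add: inner_add_right inner_diff_right inner_minus_right inner_ev)
  qed
  have dd: "v$j - v$i = 0" if "(i,j) \<in> D" for i j
  proof -
    have "ev j - ev i \<in> rho_set SP SN D" using that unfolding rho_set_def by force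
    from rho[OF this] show ?thesis by (simp add: inner_diff_right inner_ev)
  qed
  have "(a,b) \<in> aug_edges SP SN D \<or> (b,a) \<in> aug_edges SP SN D"
    using e by (auto simp: aug_adj_def)
  then show ?thesis
  proof
    assume "(a,b) \<in> aug_edges SP SN D"
    then consider i j where "a = Inl i" "b = Inl j" "(i,j) \<in> SP \<or> (i,j) \<in> SN"
      | i j where "a = Inl i" "b = Inr (i,j)" | i j where "a = Inr (i,j)" "b = Inl j" "(i,j) \<in> D"
      unfolding aug_edges_def by blast
    then show ?thesis
      by cases (auto simp: fv_def dest: sp sn dd)
  next
    assume "(b,a) \<in> aug_edges SP SN D"
    then consider i j where "b = Inl i" "a = Inl j" "(i,j) \<in> SP \<or> (i,j) \<in> SN"
      | i j where "b = Inl i" "a = Inr (i,j)" | i j where "b = Inr (i,j)" "a = Inl j" "(i,j) \<in> D"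
      unfolding aug_edges_def by blast
    then show ?thesis
      by cases (auto simp: fv_def dest: sp sn dd)
  qed
qed

lemma sym_adj: "sym ((aug_adj SP SN D)\<^sup>*)"
  by (rule sym_rtrancl) (auto simp: sym_def aug_adj_def)

lemma invariant:
  assumes V: "\<forall>x \<in> PG SP SN D. v \<bullet> x = 0"
    and B: "is_bipartition SP SN D C L R"
    and cl: "\<And>x y. x \<in> C \<Longrightarrow> (x,y) \<in> aug_adj SP SN D \<Longrightarrow> y \<in> C"
    and p: "(x,y) \<in> (aug_adj SP SN D)\<^sup>*" and x: "x \<in> C"
  shows "y \<in> C \<and> fv v y * (if y \<in> L then 1 else -1) = fv v x * (if x \<in> L then 1 else -1)"
  using p
proof (induction rule: rtrancl_induct)
  case base
  then show ?case using x by simp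
next
  case (step a b)
  have aC: "a \<in> C" using step by simp
  have bC: "b \<in> C" using cl aC step(2) by blast
  have f: "fv v b = - fv v a" using edge_zero[OF V step(2)] by simp
  have "(a,b) \<in> aug_edges SP SN D \<or> (b,a) \<in> aug_edges SP SN D"
    using step(2) by (auto simp: aug_adj_def)
  hence "(a \<in> L \<and> b \<in> R) \<or> (a \<in> R \<and> b \<in> L)"
    using B aC bC unfolding is_bipartition_def by blast
  moreover have "L \<inter> R = {}" using B unfolding is_bipartition_def by blast
  ultimately have "(if b \<in> L then 1 else -1) = - (if a \<in> L then 1 else -1::real)" by auto
  then show ?case using step f bC by auto
qed

lemma abs_const:
  assumes V: "\<forall>x \<in> PG SP SN D. v \<bullet> x = 0"
    and p: "(w,x) \<in> (aug_adj SP SN D)\<^sup>*"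
  shows "fv v x = fv v w \<or> fv v x = - fv v w"
  using p
proof (induction rule: rtrancl_induct)
  case base thus ?case by simp
next
  case (step a b)
  have "fv v b = - fv v a" using edge_zero[OF V step(2)] by simp
  thus ?case using step(3) by auto
qed

theorem mainTheorem8:
  fixes SP SN D :: "('n::finite \<times> 'n) set" and v :: "real^'n"
    and bip :: "('n + ('n \<times> 'n)) set \<Rightarrow> ('n + ('n \<times> 'n)) set \<times> ('n + ('n \<times> 'n)) set"
  assumes "\<forall>(i,j) \<in> D. i \<noteq> j"
    and "\<forall>x \<in> PG SP SN D. v \<bullet> x = 0"
    and "\<forall>C \<in> aug_components SP SN D. bipartite_comp SP SN D C \<longrightarrow>
           is_bipartition SP SN D C (fst (bip C)) (snd (bip C))"
  shows "v \<in> span {edual (proj (fst (bip C))) - edual (proj (snd (bip C))) | C.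
                     C \<in> aug_components SP SN D \<and> bipartite_comp SP SN D C}"
proof -
  note V = assms(2)
  define adj where "adj = aug_adj SP SN D"
  define comp where "comp u = {w. (u,w) \<in> adj\<^sup>*}" for u
  define comps where "comps = aug_components SP SN D"
  have comps_eq: "comps = comp ` aug_vertices D"
    unfolding comps_def aug_components_def comp_def adj_def by auto
  have symr: "(x,y) \<in> adj\<^sup>* \<Longrightarrow> (y,x) \<in> adj\<^sup>*" for x y
    using sym_adj[of SP SN D] unfolding adj_def sym_def by blast
  have closed: "y \<in> C" if "C \<in> comps" "x \<in> C" "(x,y) \<in> adj" for C x y
    using that unfolding comps_eq comp_def by (auto intro: rtrancl_into_rtrancl)
  have same: "C = comp x" if h: "C \<in> comps" "x \<in> C" for C x
  proof -
    obtain u where u: "C = comp u" using h(1) unfolding comps_eq by blast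
    have ux: "(u,x) \<in> adj\<^sup>*" using h(2) u comp_def by auto
    show ?thesis unfolding u comp_def
      using ux symr by (auto intro: rtrancl_trans)
  qed
  have self: "u \<in> comp u" for u unfolding comp_def by simp
  define Bc where "Bc = {C \<in> comps. bipartite_comp SP SN D C}"
  define L where "L C = fst (bip C)" for C
  define R where "R C = snd (bip C)" for C
  define s where "s C w = (if w \<in> L C then 1 else (-1::real))" for C w
  define c where "c C = fv v (SOME u. u \<in> C) * s C (SOME u. u \<in> C)" for C
  have isb: "is_bipartition SP SN D C (L C) (R C)" if "C \<in> Bc" for C
    using assms(3) that unfolding Bc_def comps_def L_def R_def by blast
  have cval: "c C = fv v w * s C w" if "C \<in> Bc" "w \<in> C" for C w
  proof -
    have Cc: "C \<in> comps" using that Bc_def by auto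
    have ex: "(SOME u. u \<in> C) \<in> C" using that(2) by (rule someI)
    have "(w, SOME u. u \<in> C) \<in> adj\<^sup>*"
      using same[OF Cc that(2)] ex unfolding comp_def by auto
    from invariant[OF V isb[OF that(1)] _ this[unfolded adj_def] that(2)]
    show ?thesis using closed[OF Cc] unfolding c_def s_def adj_def by auto
  qed
  have nonbip: "fv v w = 0" if "C \<in> comps" "\<not> bipartite_comp SP SN D C" "w \<in> C" for C w
  proof (rule ccontr)
    assume a0: "fv v w \<noteq> 0"
    define a where "a = fv v w"
    have Cw: "C = comp w" using same that by blast
    have pm: "fv v x = a \<or> fv v x = - a" if "x \<in> C" for x
      using abs_const[OF V, of w x] that Cw unfolding comp_def adj_def a_def by auto
    have "is_bipartition SP SN D C {x \<in> C. fv v x = a} {x \<in> C. fv v x = - a}"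
      unfolding is_bipartition_def
    proof (intro conjI)
      show "{x \<in> C. fv v x = a} \<union> {x \<in> C. fv v x = - a} = C" using pm by auto
      show "{x \<in> C. fv v x = a} \<inter> {x \<in> C. fv v x = - a} = {}" using a0 a_def by auto
      show "\<forall>(u, w)\<in>aug_edges SP SN D. u \<in> C \<and> w \<in> C \<longrightarrow>
        u \<in> {x \<in> C. fv v x = a} \<and> w \<in> {x \<in> C. fv v x = - a} \<or>
        u \<in> {x \<in> C. fv v x = - a} \<and> w \<in> {x \<in> C. fv v x = a}"
      proof -
        have E: "fv v x + fv v y = 0" if "(x,y) \<in> aug_edges SP SN D" for x y
          using edge_zero[OF V, of x y] that unfolding aug_adj_def by auto
        show ?thesis
        proof (rule ballI)
          fix p assume p: "p \<in> aug_edges SP SN D"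
          obtain x y where xy: "p = (x,y)" by (cases p)
          have "fv v x + fv v y = 0" using E p xy by auto
          then show "case p of (u,w) \<Rightarrow> u \<in> C \<and> w \<in> C \<longrightarrow>
            u \<in> {x \<in> C. fv v x = a} \<and> w \<in> {x \<in> C. fv v x = - a} \<or>
            u \<in> {x \<in> C. fv v x = - a} \<and> w \<in> {x \<in> C. fv v x = a}"
            using pm[of x] pm[of y] xy by auto
        qed
      qed
    qed
    thus False using that(2) unfolding bipartite_comp_def by blast
  qed
  have finB: "finite Bc" by (rule finite)
  define g where "g C = c C *\<^sub>R (edual (proj (L C)) - edual (proj (R C)))" for C
  have veq: "v = sum g Bc"
  proof (subst vec_eq_iff, rule allI)
    fix i
    define Ci where "Ci = comp (Inl i)"
    have Cic: "Ci \<in> comps" unfolding comps_eq Ci_def aug_vertices_def by auto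
    have gi: "g C $ i = c C * ((if Inl i \<in> L C then 1 else 0) - (if Inl i \<in> R C then 1 else 0))" for C
      unfolding g_def by (simp add: edual_def proj_def)
    have "sum g Bc $ i = (\<Sum>C\<in>Bc. if C = Ci then g C $ i else 0)"
      unfolding sum_component
    proof (rule sum.cong[OF refl])
      fix C assume CB: "C \<in> Bc"
      show "g C $ i = (if C = Ci then g C $ i else 0)"
      proof (cases "C = Ci")
        case False
        have "Inl i \<notin> C" using same[of C "Inl i"] CB False Bc_def Ci_def by auto
        moreover have "L C \<subseteq> C" "R C \<subseteq> C" using isb[OF CB] unfolding is_bipartition_def by auto
        ultimately show ?thesis using gi[of C] False by auto
      qed simp
    qed
    also have "\<dots> = (if Ci \<in> Bc then g Ci $ i else 0)" using finB by (simp add: sum.delta)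
    also have "\<dots> = v $ i"
    proof (cases "Ci \<in> Bc")
      case True
      have iC: "Inl i \<in> Ci" using self Ci_def by auto
      have LR: "L Ci \<union> R Ci = Ci" "L Ci \<inter> R Ci = {}" using isb[OF True] unfolding is_bipartition_def by auto
      have "g Ci $ i = c Ci * s Ci (Inl i)" using gi[of Ci] LR iC unfolding s_def by auto
      also have "\<dots> = fv v (Inl i) * (s Ci (Inl i) * s Ci (Inl i))" using cval[OF True iC] by simp
      also have "\<dots> = v $ i" unfolding s_def fv_def by simp
      finally show ?thesis using True by simp
    next
      case False
      have "\<not> bipartite_comp SP SN D Ci" using False Cic Bc_def by auto
      from nonbip[OF Cic this] self Ci_def have "fv v (Inl i) = 0" by auto
      thus ?thesis using False by (simp add: fv_def)
    qed
    finally show "v $ i = sum g Bc $ i" by simp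
  qed
  show ?thesis unfolding veq
  proof (rule span_sum, goal_cases)
    case (1 C)
    hence CB: "C \<in> Bc" .
    show ?case unfolding g_def
      by (rule span_scale, rule span_base) (use CB in \<open>auto simp: Bc_def comps_def L_def R_def\<close>)
  qed
qed
end
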